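(* Let $N\ge 1$, let $\mathbf{A}$ and $\mathbf{B}$ be the adjacency matrices of two undirected, connected graphs on the node set $\{1,\dots,N\}$, and let $\beta_1,\delta_1,\beta_2,\delta_2>0$. Consider the bi-virus system $$\dot{\mathbf{x}}=\beta_1\,\mathrm{diag}(\mathbf{1}-\mathbf{x}-\mathbf{y})\mathbf{A}\mathbf{x}-\delta_1\mathbf{x},\qquad \dot{\mathbf{y}}=\beta_2\,\mathrm{diag}(\mathbf{1}-\mathbf{x}-\mathbf{y})\mathbf{B}\mathbf{y}-\delta_2\mathbf{y}$$ on $D=\{(\mathbf{x},\mathbf{y})\in[0,1]^{2N}:\mathbf{x}+\mathbf{y}\le\mathbf{1}\}$, and let $\mathbf{x}^*,\mathbf{y}^*$ be as defined in the context. Then every trajectory starting from a point of $D\setminus\{(\mathbf{0},\mathbf{0})\}$ converges to the set $$Z=\{(\mathbf{u},\mathbf{w})\in D : (\mathbf{0},\mathbf{y}^* )\le_K(\mathbf{u},\mathbf{w})\le_K(\mathbf{x}^*,\mathbf{0})\}.$$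
   Context: Vector inequalities are entrywise. The southeast ordering: $(\mathbf{x},\mathbf{y})\le_K(\bar{\mathbf{x}},\bar{\mathbf{y}})$ iff $x_i\le\bar x_i$ and $y_i\ge\bar y_i$ for all $i$. With $\tau_1=\beta_1/\delta_1$, $\tau_2=\beta_2/\delta_2$ and $\lambda(\cdot)$ the spectral radius of a nonnegative matrix: $\mathbf{x}^*$ is the globally attractive fixed point of the single-virus SIS system $\dot{\mathbf{x}}=\beta_1\mathrm{diag}(\mathbf{1}-\mathbf{x})\mathbf{A}\mathbf{x}-\delta_1\mathbf{x}$ on $[0,1]^N$, namely $\mathbf{x}^*=\mathbf{0}$ if $\tau_1\lambda(\mathbf{A})\le1$ and otherwise the unique fixed point of that system in $(0,1)^N$; likewise $\mathbf{y}^*$ for $\dot{\mathbf{y}}=\beta_2\mathrm{diag}(\mathbf{1}-\mathbf{y})\mathbf{B}\mathbf{y}-\delta_2\mathbf{y}$ with threshold $\tau_2\lambda(\mathbf{B})\le 1$. Convergence to a set means the distance of the trajectory to the set tends to $0$. *)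

theory Defs
  imports "HOL-Analysis.Analysis"
begin

definition adjacency_matrix :: "real^'n^'n \<Rightarrow> bool" where
  "adjacency_matrix A \<longleftrightarrow>
     (\<forall>i j. A$i$j = 0 \<or> A$i$j = 1) \<and> (\<forall>i j. A$i$j = A$j$i) \<and> (\<forall>i. A$i$i = 0)"

definition graph_connected :: "real^'n^'n \<Rightarrow> bool" where
  "graph_connected A \<longleftrightarrow> (\<forall>i j. (i, j) \<in> {(k, l). A$k$l \<noteq> 0}\<^sup>*)"

definition spectral_radius :: "real^'n^'n \<Rightarrow> real" where
  "spectral_radius A = Max {cmod c | c. \<exists>v :: complex^'n. v \<noteq> 0 \<and>
       (\<chi> i j. complex_of_real (A$i$j)) *v v = (\<chi> i. c * v$i)}"

definition sis_field :: "real \<Rightarrow> real \<Rightarrow> real^'n^'n \<Rightarrow> real^'n \<Rightarrow> real^'n" where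
  "sis_field \<beta> \<delta> A x = (\<chi> i. \<beta> * (1 - x$i) * (A *v x)$i - \<delta> * x$i)"

definition sis_fixed_point :: "real \<Rightarrow> real \<Rightarrow> real^'n^'n \<Rightarrow> real^'n" where
  "sis_fixed_point \<beta> \<delta> A =
     (if (\<beta> / \<delta>) * spectral_radius A \<le> 1 then 0
      else (THE x. (\<forall>i. 0 < x$i \<and> x$i < 1) \<and> sis_field \<beta> \<delta> A x = 0))"

definition bivirus_field ::
  "real \<Rightarrow> real \<Rightarrow> real \<Rightarrow> real \<Rightarrow> real^'n^'n \<Rightarrow> real^'n^'n
     \<Rightarrow> (real^'n) \<times> (real^'n) \<Rightarrow> (real^'n) \<times> (real^'n)" where
  "bivirus_field \<beta>1 \<delta>1 \<beta>2 \<delta>2 A B z =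
     (let x = fst z; y = snd z in
      ((\<chi> i. \<beta>1 * (1 - x$i - y$i) * (A *v x)$i - \<delta>1 * x$i),
       (\<chi> i. \<beta>2 * (1 - x$i - y$i) * (B *v y)$i - \<delta>2 * y$i)))"

definition bivirus_domain :: "((real^'n) \<times> (real^'n)) set" where
  "bivirus_domain = {(x, y). (\<forall>i. 0 \<le> x$i \<and> x$i \<le> 1 \<and> 0 \<le> y$i \<and> y$i \<le> 1)
                               \<and> x + y \<le> 1}"

definition le_K :: "(real^'n) \<times> (real^'n) \<Rightarrow> (real^'n) \<times> (real^'n) \<Rightarrow> bool" where
  "le_K p q \<longleftrightarrow> fst p \<le> fst q \<and> snd p \<ge> snd q"

end

theory Submission
  imports Defs
begin

lemma eig_indep:
  fixes M :: "complex^'n^'n" and W :: "(complex^'n) set" and e :: "complex^'n \<Rightarrow> complex"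
  assumes "finite W" "\<forall>v\<in>W. v \<noteq> 0 \<and> M *v v = e v *s v" "inj_on e W"
  shows "vec.independent W"
  using assms
proof (induction W rule: finite_induct)
  case empty
  then show ?case using vec.independent_empty by blast
next
  case (insert a W)
  have indW: "vec.independent W" using insert by (auto simp: inj_on_insert)
  have "a \<notin> vec.span W"
  proof
    assume "a \<in> vec.span W"
    then obtain u where u: "a = (\<Sum>v\<in>W. u v *s v)" using vec.span_finite[OF insert(1)] by auto
    have "M *v a = (\<Sum>v\<in>W. u v *s (M *v v))"
      unfolding u by (simp add: vec.sum vec.scale)
    also have "\<dots> = (\<Sum>v\<in>W. (u v * e v) *s v)"
      using insert(4) by (intro sum.cong) auto
    finally have 1: "M *v a = (\<Sum>v\<in>W. (u v * e v) *s v)" .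
    have 2: "M *v a = (\<Sum>v\<in>W. (u v * e a) *s v)"
      using insert(4) unfolding u by (simp add: vec.scale_sum_right vector_smult_assoc mult.commute)
    have eq: "(\<Sum>v\<in>W. (\<lambda>v. u v * (e v - e a)) v *s v) = 0"
      using 1 2 by (simp add: algebra_simps vec.scale_left_diff_distrib sum_subtractf)
    have "\<forall>c. (\<Sum>v\<in>W. c v *s v) = 0 \<longrightarrow> (\<forall>v\<in>W. c v = 0)"
      using indW by (simp add: vec.independent_explicit)
    from this[rule_format, OF eq] have z: "\<forall>v\<in>W. u v * (e v - e a) = 0" by simp
    have "\<forall>v\<in>W. u v = 0"
    proof
      fix v assume "v \<in> W"
      hence "e v \<noteq> e a" using insert(2,5) by (auto simp: inj_on_def)
      thus "u v = 0" using z \<open>v\<in>W\<close> by auto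
    qed
    hence "a = 0" using u by simp
    thus False using insert(4) by auto
  qed
  then show ?case using indW by (simp add: vec.independent_insertI)
qed


lemma eigval_unique:
  fixes v :: "complex^'n"
  assumes "v \<noteq> 0" "c *s v = d *s v" shows "c = d"
proof -
  obtain i where "v$i \<noteq> 0" using assms(1) by (metis vec_eq_iff zero_index)
  moreover have "c * v$i = d * v$i" using assms(2) by (metis vector_smult_component)
  ultimately show ?thesis by simp
qed

lemma eigvals_finite:
  fixes M :: "complex^'n^'n"
  shows "finite {c. \<exists>v. v \<noteq> 0 \<and> M *v v = c *s v}" (is "finite ?E")
proof -
  have "finite ?E \<and> card ?E \<le> CARD('n)"
  proof (rule finite_if_finite_subsets_card_bdd)
  fix G assume G: "G \<subseteq> ?E" "finite G"
  define w where "w c = (SOME v. v \<noteq> 0 \<and> M *v v = c *s v)" for c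
  define e where "e v = (SOME c. M *v v = c *s v)" for v
  have w: "w c \<noteq> 0 \<and> M *v w c = c *s w c" if "c \<in> G" for c
  proof -
    have "\<exists>v. v \<noteq> 0 \<and> M *v v = c *s v" using G that by auto
    from someI_ex[OF this] show ?thesis unfolding w_def .
  qed
  have ew: "e (w c) = c" if "c \<in> G" for c
  proof -
    have "M *v w c = e (w c) *s w c" unfolding e_def using w[OF that] by (auto intro: someI)
    thus ?thesis using w[OF that] eigval_unique by metis
  qed
  have injw: "inj_on w G" by (metis ew inj_onI)
  have "vec.independent (w ` G)"
  proof (rule eig_indep[where e = e and M = M])
    show "finite (w ` G)" using G by simp
    show "\<forall>v\<in>w ` G. v \<noteq> 0 \<and> M *v v = e v *s v" using w ew by auto
    show "inj_on e (w ` G)" using ew by (auto simp: inj_on_def)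
  qed
  hence "card (w ` G) \<le> vec.dim (UNIV :: (complex^'n) set)"
    by (intro vec.independent_card_le_dim) auto
  thus "card G \<le> CARD('n)" using card_image[OF injw] by (simp add: card_cart_basis)
qed
  thus ?thesis by simp
qed

lemma sym_inner:
  fixes A :: "real^'n^'n"
  assumes "\<forall>i j. A$i$j = A$j$i"
  shows "y \<bullet> (A *v z) = z \<bullet> (A *v y)"
proof -
  have "y \<bullet> (A *v z) = (\<Sum>i\<in>UNIV. \<Sum>j\<in>UNIV. y$i * A$i$j * z$j)"
    by (simp add: inner_vec_def matrix_vector_mult_def sum_distrib_left mult.assoc)
  also have "\<dots> = (\<Sum>j\<in>UNIV. \<Sum>i\<in>UNIV. y$i * A$i$j * z$j)" by (rule sum.swap)
  also have "\<dots> = z \<bullet> (A *v y)"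
    by (simp add: inner_vec_def matrix_vector_mult_def sum_distrib_left assms mult_ac)
  finally show ?thesis .
qed

lemma arith1:
  fixes X Y r vAv s a a' q w bb n :: real
  assumes "X \<le> r * Y" "X = vAv + s * a + s * a' + s^2 * q" "a = a'"
    "Y = w + 2 * s * bb + s^2 * n" "n = r * bb - a'" "vAv = r * w"
  shows "0 \<le> 2 * s * n + s^2 * (r * n - q)"
proof -
  have "r * Y - X = 2 * s * (r * bb - a') + s^2 * (r * n - q)"
    unfolding assms(2,4,6) assms(3) by (simp add: algebra_simps power2_eq_square)
  thus ?thesis using assms(1) unfolding assms(5)[symmetric] by linarith
qed

lemma arith2:
  fixes n p s :: real
  assumes "n > 0" "p \<ge> 0" "0 \<le> 2 * s * n + s^2 * p" "s = - n / (p + 1)"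
  shows False
proof -
  define t where "t = n / (p + 1)"
  have t0: "t > 0" using assms(1,2) by (simp add: t_def)
  have st: "s = - t" by (simp add: assms(4) t_def)
  have "0 \<le> t * (t * p - 2 * n)" using assms(3) unfolding st
    by (simp add: algebra_simps power2_eq_square)
  hence "t * p - 2 * n \<ge> 0" using t0 by (simp add: zero_le_mult_iff)
  moreover have "t * p \<le> n"
  proof -
    have "t * p = n * (p / (p + 1))" unfolding t_def by simp
    moreover have "p / (p + 1) \<le> 1" using assms(2) by simp
    moreover have "n * (p / (p + 1)) \<le> n * 1"
      using \<open>p / (p + 1) \<le> 1\<close> assms(1) by (intro mult_left_mono) auto
    ultimately show ?thesis by linarith
  qed
  ultimately show False using assms(1) by linarith
qed

lemma psd_zero_imp_eig:
  fixes A :: "real^'n^'n"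
  assumes sym: "\<forall>i j. A$i$j = A$j$i"
    and P: "\<And>y. y \<bullet> (A *v y) \<le> r * (y \<bullet> y)"
    and v: "v \<bullet> (A *v v) = r * (v \<bullet> v)"
  shows "A *v v = r *\<^sub>R v"
proof -
  define d where "d = r *\<^sub>R v - A *v v"
  define p where "p = r * (d \<bullet> d) - d \<bullet> (A *v d)"
  have p0: "p \<ge> 0" using P[of d] by (simp add: p_def)
  have key: "0 \<le> 2 * s * (d \<bullet> d) + s^2 * p" for s
  proof -
    have "(v + s *\<^sub>R d) \<bullet> (A *v (v + s *\<^sub>R d)) \<le> r * ((v + s *\<^sub>R d) \<bullet> (v + s *\<^sub>R d))"
      by (rule P)
    moreover have "(v + s *\<^sub>R d) \<bullet> (A *v (v + s *\<^sub>R d)) =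
        v \<bullet> (A *v v) + s * (v \<bullet> (A *v d)) + s * (d \<bullet> (A *v v)) + s^2 * (d \<bullet> (A *v d))"
      by (simp add: matrix_vector_right_distrib inner_add_left inner_add_right
           matrix_vector_mult_scaleR power2_eq_square algebra_simps)
    moreover have "v \<bullet> (A *v d) = d \<bullet> (A *v v)" by (rule sym_inner[OF sym])
    moreover have "(v + s *\<^sub>R d) \<bullet> (v + s *\<^sub>R d) = v \<bullet> v + 2 * s * (v \<bullet> d) + s^2 * (d \<bullet> d)"
      by (simp add: inner_add_left inner_add_right power2_eq_square algebra_simps inner_commute)
    moreover have "d \<bullet> d = r * (v \<bullet> d) - d \<bullet> (A *v v)"
      unfolding d_def by (simp add: inner_diff_right inner_diff_left inner_commute algebra_simps)
    ultimately show ?thesis using v unfolding p_def by (rule arith1)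
  qed
  have "d \<bullet> d = 0"
  proof (rule ccontr)
    assume "d \<bullet> d \<noteq> 0"
    hence dd: "d \<bullet> d > 0" by (simp add: order_le_neq_trans)
    show False using arith2[OF dd p0 key[of "- (d \<bullet> d) / (p + 1)"]] by simp
  qed
  thus ?thesis unfolding d_def by simp
qed


lemma quad_sum: "y \<bullet> (A *v y) = (\<Sum>i\<in>UNIV. \<Sum>j\<in>UNIV. y$i * A$i$j * y$j)"
  for A :: "real^'n^'n"
  by (simp add: inner_vec_def matrix_vector_mult_def sum_distrib_left mult.assoc)

lemma perron_sym:
  fixes A :: "real^'n^'n"
  assumes adj: "adjacency_matrix A" and con: "graph_connected A"
  shows "\<exists>r v. (\<forall>i. 0 < v$i) \<and> A *v v = r *\<^sub>R v \<and> 0 \<le> r"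
proof -
  have sym: "\<forall>i j. A$i$j = A$j$i" using adj by (simp add: adjacency_matrix_def)
  have nn: "A$i$j \<ge> 0" for i j using adj unfolding adjacency_matrix_def by (metis order_refl zero_le_one)
  define Q where "Q y = y \<bullet> (A *v y)" for y :: "real^'n"
  have cQ: "continuous_on (sphere 0 1) Q" unfolding Q_def by (intro continuous_intros)
  have ne: "sphere (0::real^'n) 1 \<noteq> {}" by simp
  obtain x where x: "x \<in> sphere 0 1" "\<forall>y\<in>sphere 0 1. Q y \<le> Q x"
    using continuous_attains_sup[OF compact_sphere ne cQ] by blast
  define r where "r = Q x"
  have P: "y \<bullet> (A *v y) \<le> r * (y \<bullet> y)" for y
  proof (cases "y = 0")
    case True thus ?thesis by simp
  next
    case False
    hence ny: "norm y > 0" by simp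
    have "(y /\<^sub>R norm y) \<in> sphere 0 1" using ny by simp
    hence "Q (y /\<^sub>R norm y) \<le> r" using x unfolding r_def by blast
    moreover have "Q (y /\<^sub>R norm y) = Q y / (norm y)^2"
      unfolding Q_def by (simp add: matrix_vector_mult_scaleR power2_eq_square field_simps)
    ultimately have "Q y \<le> r * (norm y)^2" using ny by (simp add: divide_le_eq mult.commute)
    thus ?thesis unfolding Q_def by (simp add: power2_norm_eq_inner)
  qed
  define v where "v = (\<chi> i. \<bar>x$i\<bar>)"
  have vv: "v \<bullet> v = x \<bullet> x" unfolding v_def inner_vec_def by (simp add: abs_mult_self_eq)
  have xx: "x \<bullet> x = 1" using x(1) by (simp add: dot_square_norm)
  have "Q x \<le> Q v"
    unfolding Q_def quad_sum
  proof (intro sum_mono)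
    fix i j
    show "x$i * A$i$j * x$j \<le> v$i * A$i$j * v$j"
    proof -
      have "x$i * A$i$j * x$j = A$i$j * (x$i * x$j)" by simp
      also have "\<dots> \<le> A$i$j * (\<bar>x$i\<bar> * \<bar>x$j\<bar>)"
        using nn by (intro mult_left_mono) (auto simp: abs_mult[symmetric])
      finally show ?thesis unfolding v_def by (simp add: mult_ac)
    qed
  qed
  hence Qv: "v \<bullet> (A *v v) = r * (v \<bullet> v)" using P[of v] vv xx unfolding Q_def r_def by simp
  have eig: "A *v v = r *\<^sub>R v" by (rule psd_zero_imp_eig[OF sym P Qv])
  have vnn: "v$i \<ge> 0" for i unfolding v_def by simp
  have r0: "0 \<le> r"
  proof -
    have "0 \<le> v \<bullet> (A *v v)" unfolding quad_sum using vnn nn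
      by (intro sum_nonneg) auto
    thus ?thesis using Qv vv xx by simp
  qed
  have prp: "v$l = 0" if "v$k = 0" "A$k$l \<noteq> 0" for k l
  proof -
    have "(A *v v)$k = 0" using eig that(1) by simp
    hence "(\<Sum>m\<in>UNIV. A$k$m * v$m) = 0" by (simp add: matrix_vector_mult_def)
    moreover have "\<forall>m\<in>UNIV. 0 \<le> A$k$m * v$m" using nn vnn by simp
    ultimately have "\<forall>m\<in>UNIV. A$k$m * v$m = 0" using sum_nonneg_eq_0_iff[of UNIV "\<lambda>m. A$k$m * v$m"] by simp
    thus ?thesis using that(2) by auto
  qed
  have pos: "0 < v$i" for i
  proof (rule ccontr)
    assume "\<not> 0 < v$i"
    hence vi: "v$i = 0" using vnn[of i] by simp
    have "v$j = 0" for j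
    proof -
      have "(i, j) \<in> {(k, l). A$k$l \<noteq> 0}\<^sup>*" using con by (simp add: graph_connected_def)
      thus ?thesis
      proof (induction rule: rtrancl_induct)
        case base thus ?case by (rule vi)
      next
        case (step k l) thus ?case using prp by auto
      qed
    qed
    hence "v = 0" by (simp add: vec_eq_iff)
    thus False using vv xx by simp
  qed
  show ?thesis using pos eig r0 by blast
qed

lemma finite_argmax: fixes f :: "'n::finite \<Rightarrow> real" shows "\<exists>k. \<forall>j. f j \<le> f k"
proof -
  have "Max (range f) \<in> range f" by (rule Max_in) auto
  then obtain k where "f k = Max (range f)" by (metis imageE)
  thus ?thesis by (metis Max_ge finite rangeI finite_UNIV finite_imageI)
qed

lemma finite_argmin: fixes f :: "'n::finite \<Rightarrow> real" shows "\<exists>k. \<forall>j. f k \<le> f j"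
  using finite_argmax[of "\<lambda>i. - f i"] by auto

lemma spectral_radius_eq:
  fixes A :: "real^'n^'n"
  assumes nn: "\<forall>i j. A$i$j \<ge> 0" and pos: "\<forall>i. 0 < v$i" and eig: "A *v v = r *\<^sub>R v" and r0: "r \<ge> 0"
  shows "spectral_radius A = r"
proof -
  define Ac where "Ac = (\<chi> i j. complex_of_real (A$i$j))"
  define S where "S = {cmod c | c. \<exists>w :: complex^'n. w \<noteq> 0 \<and> Ac *v w = (\<chi> i. c * w$i)}"
  have SE: "S = cmod ` {c. \<exists>w. w \<noteq> 0 \<and> Ac *v w = c *s w}"
    unfolding S_def vector_scalar_mult_def by auto
  have fin: "finite S" unfolding SE using eigvals_finite by blast
  have rS: "r \<in> S"
  proof -
    define w where "w = (\<chi> i. complex_of_real (v$i))"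
    have "w \<noteq> 0" using pos unfolding w_def by (metis less_irrefl of_real_eq_0_iff vec_lambda_beta zero_index)
    moreover have "Ac *v w = (\<chi> i. complex_of_real r * w$i)"
    proof -
      have "(A *v v)$i = r * v$i" for i using eig by simp
      hence "(\<Sum>j\<in>UNIV. A$i$j * v$j) = r * v$i" for i by (simp add: matrix_vector_mult_def)
      hence "(\<Sum>j\<in>UNIV. complex_of_real (A$i$j) * complex_of_real (v$j)) = complex_of_real r * complex_of_real (v$i)" for i
        by (metis (no_types, lifting) of_real_mult of_real_sum sum.cong)
      thus ?thesis unfolding Ac_def w_def by (simp add: matrix_vector_mult_def vec_eq_iff)
    qed
    ultimately show ?thesis unfolding S_def using r0 by force
  qed
  have le: "s \<le> r" if sS: "s \<in> S" for s
  proof -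
    obtain c w where s: "s = cmod c" and w: "w \<noteq> 0" "Ac *v w = (\<chi> i. c * w$i)"
      using sS unfolding S_def by blast
    obtain k where k: "\<forall>j. cmod (w$j) / v$j \<le> cmod (w$k) / v$k"
      using finite_argmax[of "\<lambda>j. cmod (w$j) / v$j"] by auto
    define m where "m = cmod (w$k) / v$k"
    have wj: "cmod (w$j) \<le> m * v$j" for j using k pos unfolding m_def by (simp add: divide_le_eq)
    have "w$k \<noteq> 0"
    proof
      assume "w$k = 0"
      hence "cmod (w$j) \<le> 0" for j using wj[of j] unfolding m_def by simp
      hence "w = 0" by (simp add: vec_eq_iff)
      thus False using w by simp
    qed
    hence wk: "cmod (w$k) > 0" by simp
    have "cmod c * cmod (w$k) = cmod ((Ac *v w)$k)" using w(2) by (simp add: norm_mult)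
    also have "\<dots> = cmod (\<Sum>j\<in>UNIV. complex_of_real (A$k$j) * w$j)"
      by (simp add: Ac_def matrix_vector_mult_def)
    also have "\<dots> \<le> (\<Sum>j\<in>UNIV. cmod (complex_of_real (A$k$j) * w$j))" by (rule norm_sum)
    also have "\<dots> = (\<Sum>j\<in>UNIV. A$k$j * cmod (w$j))" using nn by (simp add: norm_mult)
    also have "\<dots> \<le> (\<Sum>j\<in>UNIV. A$k$j * (m * v$j))" using nn wj by (intro sum_mono mult_left_mono) auto
    also have "\<dots> = m * (A *v v)$k" by (simp add: matrix_vector_mult_def sum_distrib_left mult_ac)
    also have "\<dots> = r * cmod (w$k)" using eig pos[rule_format, of k] unfolding m_def by simp
    finally have "cmod c * cmod (w$k) \<le> r * cmod (w$k)" .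
    thus ?thesis using wk s by simp
  qed
  have "Max S = r" by (rule Max_eqI[OF fin le rS])
  thus ?thesis unfolding spectral_radius_def S_def Ac_def .
qed

lemma deriv_left:
  fixes f :: "real \<Rightarrow> real"
  assumes "(f has_real_derivative D) (at t0 within {0..})" "t0 > 0" "D > 0"
  shows "\<exists>t. 0 \<le> t \<and> t < t0 \<and> f t < f t0"
proof -
  obtain d where d: "d > 0" "\<forall>h>0. t0 - h \<in> {0..} \<longrightarrow> h < d \<longrightarrow> f (t0 - h) < f t0"
    using has_real_derivative_pos_inc_left[OF assms(1,3)] by blast
  define h where "h = min d t0 / 2"
  have "h > 0" "h < d" "t0 - h \<ge> 0" using d assms(2) by (auto simp: h_def)
  hence "f (t0 - h) < f t0" using d by auto
  thus ?thesis using \<open>h > 0\<close> \<open>t0 - h \<ge> 0\<close> by (intro exI[of _ "t0 - h"]) auto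
qed

lemma first_hit:
  fixes r :: "'j::finite \<Rightarrow> real \<Rightarrow> real"
  assumes cont: "\<And>j. continuous_on {0..T} (r j)" and init: "\<And>j. r j 0 > 0"
    and hit: "0 \<le> t1" "t1 \<le> T" "r j1 t1 \<le> 0"
  shows "\<exists>t0. 0 < t0 \<and> t0 \<le> T \<and> (\<forall>j. r j t0 \<ge> 0) \<and> (\<exists>k. r k t0 = 0)
           \<and> (\<forall>t j. 0 \<le> t \<longrightarrow> t < t0 \<longrightarrow> r j t > 0)"
proof -
  define S where "S = (\<Union>j. {0..T} \<inter> r j -` {..0})"
  have cS: "closed S" unfolding S_def
    by (intro closed_Union finite_imageI; auto intro!: continuous_closed_preimage cont)
  have t1S: "t1 \<in> S" using hit unfolding S_def by auto
  have bdd: "bdd_below S" unfolding S_def by (auto intro: bdd_belowI[of _ 0])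
  define t0 where "t0 = Inf S"
  have t0S: "t0 \<in> S" unfolding t0_def using closed_contains_Inf[OF _ bdd cS] t1S by blast
  have t0le: "t0 \<le> t" if "t \<in> S" for t unfolding t0_def using cInf_lower[OF that bdd] .
  obtain k where k: "0 \<le> t0" "t0 \<le> T" "r k t0 \<le> 0" using t0S unfolding S_def by auto
  have t0pos: "t0 > 0" using k init[of k] by (cases "t0 = 0") auto
  have before: "r j t > 0" if "0 \<le> t" "t < t0" for t j
  proof (rule ccontr)
    assume "\<not> r j t > 0"
    hence "t \<in> S" using that k unfolding S_def by (auto simp: not_less)
    thus False using t0le that by force
  qed
  have nonneg: "r j t0 \<ge> 0" for j
  proof (rule ccontr)
    assume neg: "\<not> r j t0 \<ge> 0"
    have "continuous_on {0..t0} (r j)" using cont by (rule continuous_on_subset) (use k in auto)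
    then obtain s where s: "0 \<le> s" "s \<le> t0" "r j s = 0"
      using IVT2'[of "r j" t0 0 0] neg init[of j] k by auto
    have "s \<noteq> t0" using s neg by auto
    thus False using before[of s j] s by auto
  qed
  have "r k t0 = 0" using nonneg[of k] k by auto
  thus ?thesis using t0pos k nonneg before by blast
qed


lemma deriv_cont_on:
  fixes f :: "real \<Rightarrow> real"
  assumes "\<And>t. t \<ge> 0 \<Longrightarrow> (f has_real_derivative D t) (at t within {0..})"
  shows "continuous_on {0..T} f"
proof -
  have "continuous_on {0..} f"
    unfolding continuous_on_eq_continuous_within using assms DERIV_continuous by fastforce
  thus ?thesis by (rule continuous_on_subset) auto
qed

lemma exp_small:
  fixes C g e t :: real
  assumes "C > 0" "g > 0" "e > 0" "t \<ge> C / (g * e)"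
  shows "C * exp (- g * t) \<le> e"
proof -
  have t0: "t \<ge> 0" using assms by (meson divide_nonneg_pos less_imp_le mult_pos_pos order_trans)
  have "1 + g * t \<le> exp (g * t)" by (rule exp_ge_add_one_self)
  moreover have "0 < 1 + g * t" using t0 assms(2) by (simp add: add_pos_nonneg)
  ultimately have "inverse (exp (g * t)) \<le> inverse (1 + g * t)" by (rule le_imp_inverse_le)
  hence "exp (- g * t) \<le> 1 / (1 + g * t)" by (simp add: exp_minus divide_inverse)
  hence "C * exp (- g * t) \<le> C / (1 + g * t)" using assms(1) by (simp add: mult_left_mono divide_inverse)
  also have "\<dots> \<le> e"
  proof -
    have "C \<le> e * (g * t)" using assms by (simp add: divide_le_eq mult_ac)
    hence "C \<le> e * (1 + g * t)" using assms(3) by (simp add: algebra_simps)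
    moreover have "0 < 1 + g * t" using t0 assms(2) by (simp add: add_pos_nonneg)
    ultimately show ?thesis by (simp add: pos_divide_le_eq mult_ac)
  qed
  finally show ?thesis .
qed

lemma decay:
  fixes u d :: "'j::finite \<Rightarrow> real \<Rightarrow> real"
  assumes deriv: "\<And>j t. t \<ge> 0 \<Longrightarrow> (u j has_real_derivative d j t) (at t within {0..})"
    and eta: "\<eta> > 0"
    and cond: "\<And>t k. t \<ge> 0 \<Longrightarrow> u k t \<ge> L \<Longrightarrow> (\<forall>j. u j t \<le> u k t) \<Longrightarrow> d k t \<le> - \<eta>"
    and e: "e > 0"
  shows "\<exists>T. \<forall>t\<ge>T. \<forall>j. u j t \<le> L + e"
proof -
  define C where "C = 1 + \<bar>L\<bar> + (\<Sum>j\<in>UNIV. \<bar>u j 0\<bar>)"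
  have C0: "C > 0" unfolding C_def by (simp add: add_pos_nonneg sum_nonneg)
  have Cj: "u j 0 < L + C" for j
  proof -
    have "\<bar>u j 0\<bar> \<le> (\<Sum>j\<in>UNIV. \<bar>u j 0\<bar>)" by (rule member_le_sum) auto
    thus ?thesis unfolding C_def by linarith
  qed
  define g where "g = \<eta> / (2 * C)"
  have g0: "g > 0" using C0 eta by (simp add: g_def)
  define b where "b t = L + C * exp (- g * t)" for t
  have bd: "(b has_real_derivative (- g * C * exp (- g * t))) (at t within {0..})" for t
    unfolding b_def by (auto intro!: derivative_eq_intros)
  have bL: "b t \<ge> L" for t unfolding b_def using C0 by simp
  have bder: "- g * C * exp (- g * t) \<ge> - \<eta> / 2" if "t \<ge> 0" for t
  proof -
    have "exp (- g * t) \<le> 1" using g0 that by simp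
    hence "g * C * exp (- g * t) \<le> g * C" using g0 C0 by (simp add: mult_left_le)
    also have "g * C = \<eta> / 2" using C0 by (simp add: g_def)
    finally show ?thesis by simp
  qed
  have below: "u j t < b t" if tnn: "t \<ge> 0" for t j
  proof (rule ccontr)
    assume "\<not> u j t < b t"
    hence hit: "(\<lambda>j t. b t - u j t) j t \<le> 0" by simp
    have cont: "continuous_on {0..t} ((\<lambda>j t. b t - u j t) j')" for j'
      using deriv_cont_on[of "\<lambda>s. b s - u j' s", OF DERIV_diff[OF bd deriv]] by simp
    have init: "(\<lambda>j t. b t - u j t) j' 0 > 0" for j' using Cj[of j'] by (simp add: b_def)
    obtain t0 k where t0: "0 < t0" "t0 \<le> t" "\<forall>j. b t0 - u j t0 \<ge> 0" "b t0 - u k t0 = 0"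
      "\<forall>s j. 0 \<le> s \<longrightarrow> s < t0 \<longrightarrow> b s - u j s > 0"
      using first_hit[of t "\<lambda>j s. b s - u j s" t j, OF cont init tnn order_refl hit] by auto
    have "d k t0 \<le> - \<eta>" using t0 bL[of t0] by (intro cond) auto
    hence "- g * C * exp (- g * t0) - d k t0 > 0" using bder[of t0] t0(1) eta by linarith
    then obtain s where s: "0 \<le> s" "s < t0" "b s - u k s < b t0 - u k t0"
      using deriv_left[OF DERIV_diff[OF bd deriv] t0(1)] t0(1) by force
    have "0 < b s - u k s" using t0(5) s(1,2) by blast
    thus False using s(3) t0(4) by linarith
  qed
  show ?thesis
  proof (intro exI allI impI)
    fix t j assume t: "t \<ge> C / (g * e)"
    hence "t \<ge> 0" using C0 g0 e by (meson divide_nonneg_pos less_imp_le mult_pos_pos order_trans)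
    hence "u j t < b t" by (rule below)
    moreover have "C * exp (- g * t) \<le> e" by (rule exp_small[OF C0 g0 e t])
    ultimately show "u j t \<le> L + e" unfolding b_def by simp
  qed
qed

lemma stay_nonneg:
  fixes q d :: "'j::finite \<Rightarrow> real \<Rightarrow> real"
  assumes deriv: "\<And>j t. t \<ge> 0 \<Longrightarrow> (q j has_real_derivative d j t) (at t within {0..})"
    and init: "\<And>j. q j 0 \<ge> 0"
    and cond: "\<And>T. T \<ge> 0 \<Longrightarrow> \<exists>K\<ge>0. \<forall>t k. 0 \<le> t \<longrightarrow> t \<le> T \<longrightarrow> q k t \<le> 0
                  \<longrightarrow> (\<forall>j. q k t \<le> q j t) \<longrightarrow> d k t \<ge> K * q k t"
  shows "t \<ge> 0 \<Longrightarrow> q j t \<ge> 0"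
proof (rule ccontr)
  assume t1: "t \<ge> 0" and neg: "\<not> q j t \<ge> 0"
  obtain K where K: "K \<ge> 0" "\<forall>s k. 0 \<le> s \<longrightarrow> s \<le> t \<longrightarrow> q k s \<le> 0
                  \<longrightarrow> (\<forall>j. q k s \<le> q j s) \<longrightarrow> d k s \<ge> K * q k s"
    using cond[OF t1] by blast
  define eta where "eta = - q j t / (2 * exp ((K + 1) * t))"
  have eta0: "eta > 0" unfolding eta_def using neg by (intro divide_pos_pos) auto
  define b where "b s = - eta * exp ((K + 1) * s)" for s
  have bd: "(b has_real_derivative (- eta * exp ((K + 1) * s) * (K + 1))) (at s within {0..})" for s
    unfolding b_def by (auto intro!: derivative_eq_intros)
  have bneg: "b s < 0" for s unfolding b_def using eta0 by simp
  have bt: "b t = q j t / 2" unfolding b_def eta_def by simp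
  have hit: "(\<lambda>j s. q j s - b s) j t \<le> 0" using bt neg by simp
  have cont: "continuous_on {0..t} ((\<lambda>j s. q j s - b s) j')" for j'
    using deriv_cont_on[of "\<lambda>s. q j' s - b s", OF DERIV_diff[OF deriv bd]] by simp
  have ini: "(\<lambda>j s. q j s - b s) j' 0 > 0" for j' using init[of j'] eta0 by (simp add: b_def)
  obtain t0 k where t0: "0 < t0" "t0 \<le> t" "\<forall>j. q j t0 - b t0 \<ge> 0" "q k t0 - b t0 = 0"
      "\<forall>s j. 0 \<le> s \<longrightarrow> s < t0 \<longrightarrow> q j s - b s > 0"
    using first_hit[of t "\<lambda>j s. q j s - b s" t j, OF cont ini t1 order_refl hit] by auto
  have qk: "q k t0 = b t0" using t0(4) by simp
  have "d k t0 \<ge> K * q k t0"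
    using K(2) t0 qk bneg[of t0] by (metis diff_ge_0_iff_ge less_imp_le)
  hence "d k t0 - (- eta * exp ((K + 1) * t0) * (K + 1)) > 0"
    using qk bneg[of t0] unfolding b_def by (simp add: algebra_simps)
  then obtain s where s: "0 \<le> s" "s < t0" "q k s - b s < q k t0 - b t0"
    using deriv_left[OF DERIV_diff[OF deriv bd] t0(1)] t0(1) by force
  have "0 < q k s - b s" using t0(5) s(1,2) by blast
  thus False using s(3) t0(4) by linarith
qed

lemma mv_comp: "(A *v x)$i = (\<Sum>j\<in>UNIV. A$i$j * x$j)" for A :: "real^'n^'n"
  by (simp add: matrix_vector_mult_def)

lemma mv_mono:
  fixes A :: "real^'n^'n"
  assumes "\<forall>i j. A$i$j \<ge> 0" "\<forall>j. x$j \<le> y$j"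
  shows "(A *v x)$i \<le> (A *v y)$i"
  unfolding mv_comp using assms by (intro sum_mono mult_left_mono) auto

lemma mv_nonneg:
  fixes A :: "real^'n^'n"
  assumes "\<forall>i j. A$i$j \<ge> 0" "\<forall>j. x$j \<ge> 0"
  shows "(A *v x)$i \<ge> 0"
  unfolding mv_comp using assms by (intro sum_nonneg) auto

lemma mv_ratio:
  fixes A :: "real^'n^'n"
  assumes "\<forall>i j. A$i$j \<ge> 0" "\<forall>j. x$j \<le> g * w$j"
  shows "(A *v x)$i \<le> g * (A *v w)$i"
proof -
  have "(A *v x)$i \<le> (A *v (g *\<^sub>R w))$i" using assms by (intro mv_mono) auto
  thus ?thesis by (simp add: matrix_vector_mult_scaleR)
qed

lemma sis_comp: "sis_field \<beta> \<delta> A x $ i = \<beta> * (1 - x$i) * (A *v x)$i - \<delta> * x$i"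
  by (simp add: sis_field_def)

lemma arith_fp:
  fixes \<beta> \<delta> ak bk P Q g :: real
  assumes "\<beta> > 0" "1 - bk > 0" "P > 0" "ak > 0" "g > 1"
    "Q \<le> g * P" "bk = g * ak" "\<delta> * ak = \<beta> * (1 - ak) * P" "\<beta> * (1 - bk) * Q - \<delta> * bk = 0"
  shows False
proof -
  have 1: "\<beta> * (1 - bk) * Q \<le> \<beta> * (1 - bk) * (g * P)"
    using assms by (intro mult_left_mono) auto
  have 2: "\<delta> * bk = g * (\<beta> * (1 - ak) * P)" using assms(7,8) by (simp add: mult_ac)
  have 3: "\<beta> * (1 - bk) * (g * P) - g * (\<beta> * (1 - ak) * P) = (g * \<beta> * P * ak) * (1 - g)"
    using assms(7) by (simp add: algebra_simps)
  have 4: "(g * \<beta> * P * ak) * (1 - g) < 0" using assms by (intro mult_pos_neg) auto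
  show False using 1 2 3 4 assms(9) by linarith
qed

lemma fp_le:
  fixes A :: "real^'n^'n"
  assumes nn: "\<forall>i j. A$i$j \<ge> 0" and b0: "\<beta> > 0" and d0: "\<delta> > 0"
    and a: "\<forall>i. 0 < a$i \<and> a$i < 1" and fa: "sis_field \<beta> \<delta> A a = 0"
    and b: "\<forall>i. 0 < b$i \<and> b$i < 1" and fb: "sis_field \<beta> \<delta> A b = 0"
  shows "b$i \<le> a$i"
proof -
  obtain k where k: "\<forall>j. b$j / a$j \<le> b$k / a$k"
    using finite_argmax[of "\<lambda>j. b$j / a$j"] by auto
  define g where "g = b$k / a$k"
  have bj: "b$j \<le> g * a$j" for j using k a unfolding g_def by (metis pos_divide_le_eq)
  have g1: "g \<le> 1"
  proof (rule ccontr)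
    assume "\<not> g \<le> 1"
    hence g: "g > 1" by simp
    have fak: "\<beta> * (1 - a$k) * (A *v a)$k - \<delta> * a$k = 0" using fa by (metis sis_comp zero_index)
    have fbk: "\<beta> * (1 - b$k) * (A *v b)$k - \<delta> * b$k = 0" using fb by (metis sis_comp zero_index)
    have "\<beta> * (1 - a$k) * (A *v a)$k > 0" using fak d0 a by (simp add: algebra_simps)
    moreover have "\<beta> * (1 - a$k) > 0" using b0 a by simp
    ultimately have P: "(A *v a)$k > 0" by (simp add: zero_less_mult_iff)
    show False
    proof (rule arith_fp[OF b0 _ P _ g])
      show "1 - b$k > 0" "a$k > 0" using a b by auto
      show "(A *v b)$k \<le> g * (A *v a)$k" using nn bj by (intro mv_ratio) auto
      show "b$k = g * a$k" using a[rule_format, of k] unfolding g_def by simp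
      show "\<delta> * a$k = \<beta> * (1 - a$k) * (A *v a)$k" using fak by simp
      show "\<beta> * (1 - b$k) * (A *v b)$k - \<delta> * b$k = 0" by (rule fbk)
    qed
  qed
  have "b$i \<le> g * a$i" by (rule bj)
  also have "\<dots> \<le> a$i" using g1 a by (simp add: mult_left_le_one_le)
  finally show ?thesis .
qed


lemma arith_mono:
  fixes xi yi P Q h \<beta> \<delta> N :: real
  assumes "0 \<le> xi" "xi \<le> yi" "yi \<le> 1" "0 \<le> P" "P \<le> Q" "P \<le> N" "h > 0" "\<beta> > 0" "\<delta> > 0"
    "h * (\<beta> * N + \<delta>) = 1"
  shows "xi + h * (\<beta> * (1 - xi) * P - \<delta> * xi) \<le> yi + h * (\<beta> * (1 - yi) * Q - \<delta> * yi)"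
proof -
  have 1: "(1 - yi) * P \<le> (1 - yi) * Q" using assms by (intro mult_left_mono) auto
  have 2: "h * \<beta> * P + h * \<delta> \<le> 1"
  proof -
    have "h * \<beta> * P \<le> h * \<beta> * N" using assms by (intro mult_left_mono) auto
    thus ?thesis using assms(10) by (simp add: algebra_simps)
  qed
  have 3: "0 \<le> (yi - xi) * (1 - h * \<beta> * P - h * \<delta>)" using assms 2 by (intro mult_nonneg_nonneg) auto
  have 4: "h * \<beta> * ((1 - yi) * P) \<le> h * \<beta> * ((1 - yi) * Q)" using 1 assms by (intro mult_left_mono) auto
  have "yi + h * (\<beta> * (1 - yi) * Q - \<delta> * yi) - (xi + h * (\<beta> * (1 - xi) * P - \<delta> * xi))
      = (yi - xi) * (1 - h * \<beta> * P - h * \<delta>) + (h * \<beta> * ((1 - yi) * Q) - h * \<beta> * ((1 - yi) * P))"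
    by (simp add: algebra_simps)
  thus ?thesis using 3 4 by linarith
qed

lemma fp_exists:
  fixes A :: "real^'n^'n"
  assumes nn: "\<forall>i j. A$i$j \<ge> 0" and le1: "\<forall>i j. A$i$j \<le> 1" and b0: "\<beta> > 0" and d0: "\<delta> > 0"
    and v: "\<forall>i. 0 < v$i" and eig: "A *v v = \<rho> *\<^sub>R v" and thr: "\<beta> * \<rho> > \<delta>"
  shows "\<exists>x. (\<forall>i. 0 < x$i \<and> x$i < 1) \<and> sis_field \<beta> \<delta> A x = 0"
proof -
  have r0: "\<rho> > 0" using thr b0 d0 by (metis mult_pos_pos not_less order.strict_trans zero_less_mult_pos)
  define \<theta> where "\<theta> = 1 - \<delta> / (\<beta> * \<rho>)"
  have th: "0 < \<theta>" "\<theta> < 1" "\<beta> * \<rho> * (1 - \<theta>) = \<delta>" using thr r0 b0 d0 by (auto simp: \<theta>_def field_simps)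
  define V where "V = (\<Sum>j\<in>UNIV. v$j)"
  have vV: "v$i \<le> V" for i unfolding V_def using v by (intro member_le_sum) (auto simp: less_imp_le)
  have V0: "V > 0" using vV[of undefined] v by (meson less_le_trans)
  define \<epsilon> where "\<epsilon> = \<theta> / V"
  have e0: "\<epsilon> > 0" using th V0 by (simp add: \<epsilon>_def)
  define lo where "lo = \<epsilon> *\<^sub>R v"
  have lo: "0 < lo$i" "lo$i \<le> \<theta>" for i
  proof -
    show "0 < lo$i" using e0 v by (simp add: lo_def)
    have "\<epsilon> * v$i \<le> \<epsilon> * V" using vV e0 by (intro mult_left_mono) auto
    thus "lo$i \<le> \<theta>" using V0 by (simp add: lo_def \<epsilon>_def)
  qed
  define N where "N = real CARD('n)"
  define h where "h = 1 / (\<beta> * N + \<delta>)"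
  have N0: "N \<ge> 0" by (simp add: N_def)
  have bN: "\<beta> * N + \<delta> > 0" using b0 d0 N0 by (simp add: add_nonneg_pos)
  have h0: "h > 0" "h * (\<beta> * N + \<delta>) = 1"
    using bN by (auto simp: h_def)
  define T where "T x = x + h *\<^sub>R sis_field \<beta> \<delta> A x" for x
  have Tc: "T x $ i = x$i + h * (\<beta> * (1 - x$i) * (A *v x)$i - \<delta> * x$i)" for x i
    by (simp add: T_def sis_comp)
  have AxN: "(A *v x)$i \<le> N" if "\<forall>j. x$j \<le> 1" "\<forall>j. 0 \<le> x$j" for x i
  proof -
    have "(A *v x)$i \<le> (\<Sum>j\<in>(UNIV::'n set). 1)" unfolding mv_comp
      using that nn le1 by (intro sum_mono) (auto intro: mult_le_one)
    thus ?thesis by (simp add: N_def)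
  qed
  have Tmono: "T x $ i \<le> T y $ i" if "\<forall>j. 0 \<le> x$j" "\<forall>j. x$j \<le> y$j" "\<forall>j. y$j \<le> 1" for x y i
    unfolding Tc
  proof (rule arith_mono[OF _ _ _ _ _ _ h0(1) b0 d0 h0(2)])
    show "0 \<le> x$i" "x$i \<le> y$i" "y$i \<le> 1" using that by auto
    show "0 \<le> (A *v x)$i" using nn that by (intro mv_nonneg) auto
    show "(A *v x)$i \<le> (A *v y)$i" using nn that by (intro mv_mono) auto
    show "(A *v x)$i \<le> N" using that by (intro AxN) (auto intro: order_trans)
  qed
  have Tlo: "lo$i \<le> T lo $ i" for i
  proof -
    have Alo: "(A *v lo)$i = \<rho> * lo$i" using eig by (simp add: lo_def matrix_vector_mult_scaleR)
    have "\<beta> * \<rho> * (1 - \<theta>) \<le> \<beta> * \<rho> * (1 - lo$i)" using lo b0 r0 by (intro mult_left_mono) auto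
    hence "0 \<le> \<beta> * \<rho> * (1 - lo$i) - \<delta>" using th by linarith
    hence "0 \<le> lo$i * (\<beta> * \<rho> * (1 - lo$i) - \<delta>)" using lo[of i] by (intro mult_nonneg_nonneg) auto
    hence "0 \<le> \<beta> * (1 - lo$i) * (A *v lo)$i - \<delta> * lo$i" unfolding Alo by (simp add: algebra_simps)
    thus ?thesis unfolding Tc using h0 by simp
  qed
  have T1: "T 1 $ i \<le> 1" for i unfolding Tc using h0 d0 by simp
  define S where "S = cbox lo (1 :: real^'n)"
  have memS: "x \<in> S \<longleftrightarrow> (\<forall>i. lo$i \<le> x$i \<and> x$i \<le> 1)" for x unfolding S_def mem_box_cart by simp
  have lo1: "lo$i \<le> 1" for i using lo(2)[of i] th(2) by linarith
  have loS: "lo \<in> S" unfolding memS using lo1 by auto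
  obtain x where x: "x \<in> S" "T x = x"
  proof (rule brouwer)
    show "compact S" "convex S" "S \<noteq> {}" using loS by (auto simp: S_def)
    show "continuous_on S T" unfolding T_def sis_field_def by (intro continuous_intros)
    show "T \<in> S \<rightarrow> S"
    proof
      fix y assume y: "y \<in> S"
      have "lo$i \<le> T y $ i" for i
      proof -
        have "T lo $ i \<le> T y $ i" using y lo unfolding memS by (intro Tmono) (auto intro: less_imp_le)
        thus ?thesis using Tlo[of i] by linarith
      qed
      moreover have "T y $ i \<le> 1" for i
      proof -
        have "0 \<le> y$j" for j using y lo(1)[of j] unfolding memS by (meson less_imp_le order_trans)
        hence "T y $ i \<le> T 1 $ i" using y unfolding memS
          by (intro Tmono) auto
        thus ?thesis using T1[of i] by linarith
      qed
      ultimately show "T y \<in> S" unfolding memS by auto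
    qed
  qed
  have f0: "sis_field \<beta> \<delta> A x = 0" using x(2) h0(1) unfolding T_def by simp
  have "0 < x$i \<and> x$i < 1" for i
  proof
    show "0 < x$i" using x(1) lo[of i] unfolding memS by (meson less_le_trans)
    have fi: "\<beta> * (1 - x$i) * (A *v x)$i - \<delta> * x$i = 0" using f0 by (metis sis_comp zero_index)
    show "x$i < 1"
    proof (rule ccontr)
      assume "\<not> x$i < 1"
      hence "x$i = 1" using x(1) unfolding memS by (meson antisym not_less)
      thus False using fi d0 by simp
    qed
  qed
  thus ?thesis using f0 by blast
qed

lemma arith_below:
  fixes \<beta> \<delta> \<rho> sk xk P g vk L vm :: real
  assumes "\<beta> > 0" "\<delta> > 0" "\<beta> * \<rho> \<le> \<delta>" "0 \<le> sk" "xk + sk \<le> 1" "0 \<le> P" "P \<le> g * \<rho> * vk"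
    "xk = g * vk" "g \<ge> L" "L > 0" "vk \<ge> vm" "vm > 0"
  shows "(\<beta> * (1 - xk - sk) * P - \<delta> * xk) / vk \<le> - (\<delta> * L^2 * vm)"
proof -
  have vk: "vk > 0" using assms by linarith
  have g0: "g > 0" using assms by linarith
  have 1: "\<beta> * (1 - xk - sk) * P \<le> \<beta> * (1 - xk) * P"
  proof -
    have "0 \<le> \<beta> * sk * P" using assms by simp
    thus ?thesis by (simp add: algebra_simps)
  qed
  have 2: "\<beta> * (1 - xk) * P \<le> \<beta> * (1 - xk) * (g * \<rho> * vk)"
    using assms by (intro mult_left_mono) auto
  have 3: "\<beta> * (1 - xk) * (g * \<rho> * vk) \<le> \<delta> * ((1 - xk) * g * vk)"
  proof -
    have "0 \<le> (1 - xk) * g * vk" using assms g0 vk by simp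
    hence "(\<beta> * \<rho>) * ((1 - xk) * g * vk) \<le> \<delta> * ((1 - xk) * g * vk)"
      using assms(3) by (intro mult_right_mono) auto
    thus ?thesis by (simp add: mult_ac)
  qed
  have 4: "\<delta> * ((1 - xk) * g * vk) - \<delta> * xk = - (\<delta> * g^2 * vk^2)"
    using assms(8) by (simp add: algebra_simps power2_eq_square)
  have D: "\<beta> * (1 - xk - sk) * P - \<delta> * xk \<le> - (\<delta> * g^2 * vk^2)" using 1 2 3 4 by linarith
  have "(\<beta> * (1 - xk - sk) * P - \<delta> * xk) / vk \<le> - (\<delta> * g^2 * vk^2) / vk"
    by (rule divide_right_mono[OF D]) (use vk in simp)
  also have "\<dots> = - (\<delta> * g^2 * vk)" using vk by (simp add: power2_eq_square)
  also have "\<dots> \<le> - (\<delta> * L^2 * vm)"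
  proof -
    have "L^2 \<le> g^2" using assms by (intro power_mono) auto
    hence "\<delta> * L^2 * vm \<le> \<delta> * g^2 * vk" using assms
      by (intro mult_mono) (auto intro: mult_left_mono)
    thus ?thesis by simp
  qed
  finally show ?thesis .
qed

lemma arith_above:
  fixes \<beta> \<delta> sk xk P g W wk e2 c :: real
  assumes "\<beta> > 0" "0 \<le> sk" "xk + sk \<le> 1" "0 \<le> P" "P \<le> g * W" "xk = g * wk" "wk > 0"
    "\<delta> * wk = \<beta> * (1 - wk) * W" "g \<ge> 1 + e2" "e2 > 0" "W \<ge> c" "c > 0"
  shows "(\<beta> * (1 - xk - sk) * P - \<delta> * xk) / wk \<le> - (\<beta> * c * e2)"
proof -
  have g0: "g > 0" using assms by linarith
  have 1: "\<beta> * (1 - xk - sk) * P \<le> \<beta> * (1 - xk) * P"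
  proof -
    have "0 \<le> \<beta> * sk * P" using assms by simp
    thus ?thesis by (simp add: algebra_simps)
  qed
  have 2: "\<beta> * (1 - xk) * P \<le> \<beta> * (1 - xk) * (g * W)"
    using assms by (intro mult_left_mono) auto
  have 3: "\<delta> * xk = g * (\<beta> * (1 - wk) * W)" using assms(6,8) by (simp add: mult_ac)
  have 4: "\<beta> * (1 - xk) * (g * W) - g * (\<beta> * (1 - wk) * W) = (g * \<beta> * W * (1 - g)) * wk"
    using assms(6) by (simp add: algebra_simps)
  have D: "\<beta> * (1 - xk - sk) * P - \<delta> * xk \<le> (g * \<beta> * W * (1 - g)) * wk" using 1 2 3 4 by linarith
  have "(\<beta> * (1 - xk - sk) * P - \<delta> * xk) / wk \<le> (g * \<beta> * W * (1 - g)) * wk / wk"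
    by (rule divide_right_mono[OF D]) (use assms(7) in simp)
  also have "\<dots> = g * \<beta> * W * (1 - g)" using assms(7) by simp
  also have "\<dots> = - (\<beta> * (g * W * (g - 1)))" by (simp add: algebra_simps)
  also have "\<dots> \<le> - (\<beta> * (1 * c * e2))"
  proof -
    have "1 * c \<le> g * W" using assms by (intro mult_mono) auto
    hence "1 * c * e2 \<le> g * W * (g - 1)" using assms by (intro mult_mono) auto
    thus ?thesis using assms(1) by simp
  qed
  finally show ?thesis by simp
qed


lemma adj_nn: "adjacency_matrix A \<Longrightarrow> \<forall>i j. A$i$j \<ge> 0"
  unfolding adjacency_matrix_def by (metis order_refl zero_le_one)

lemma adj_le1: "adjacency_matrix A \<Longrightarrow> \<forall>i j. A$i$j \<le> 1"
  unfolding adjacency_matrix_def by (metis order_refl zero_le_one)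

lemma sis_fp_cases:
  fixes A :: "real^'n^'n"
  assumes adj: "adjacency_matrix A" and con: "graph_connected A" and b0: "\<beta> > 0" and d0: "\<delta> > 0"
  obtains (below) \<rho> v where "\<forall>i. 0 < v$i" "A *v v = \<rho> *\<^sub>R v" "\<beta> * \<rho> \<le> \<delta>"
      "sis_fixed_point \<beta> \<delta> A = 0"
    | (above) "\<forall>i. 0 < sis_fixed_point \<beta> \<delta> A $ i \<and> sis_fixed_point \<beta> \<delta> A $ i < 1"
      "sis_field \<beta> \<delta> A (sis_fixed_point \<beta> \<delta> A) = 0"
proof -
  obtain \<rho> v where v: "\<forall>i. 0 < v$i" "A *v v = \<rho> *\<^sub>R v" "0 \<le> \<rho>"
    using perron_sym[OF adj con] by blast
  have sr: "spectral_radius A = \<rho>" by (rule spectral_radius_eq[OF adj_nn[OF adj] v(1,2,3)])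
  show ?thesis
  proof (cases "\<beta> * \<rho> \<le> \<delta>")
    case True
    hence "\<beta> / \<delta> * spectral_radius A \<le> 1" using d0 sr by (simp add: field_simps)
    hence "sis_fixed_point \<beta> \<delta> A = 0" by (simp add: sis_fixed_point_def)
    thus ?thesis using below v True by blast
  next
    case False
    hence nle: "\<not> \<beta> / \<delta> * spectral_radius A \<le> 1" using d0 sr by (simp add: field_simps)
    obtain w where w: "\<forall>i. 0 < w$i \<and> w$i < 1" "sis_field \<beta> \<delta> A w = 0"
      using fp_exists[OF adj_nn[OF adj] adj_le1[OF adj] b0 d0 v(1,2)] False by force
    have "(THE x. (\<forall>i. 0 < x$i \<and> x$i < 1) \<and> sis_field \<beta> \<delta> A x = 0) = w"
    proof (rule the_equality)
      show "(\<forall>i. 0 < w$i \<and> w$i < 1) \<and> sis_field \<beta> \<delta> A w = 0" using w by blast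
      fix x assume x: "(\<forall>i. 0 < x$i \<and> x$i < 1) \<and> sis_field \<beta> \<delta> A x = 0"
      have "x$i \<le> w$i" for i using fp_le[OF adj_nn[OF adj] b0 d0 w(1) w(2)] x by blast
      moreover have "w$i \<le> x$i" for i using fp_le[OF adj_nn[OF adj] b0 d0 _ _ w(1) w(2)] x by blast
      ultimately show "x = w" by (simp add: vec_eq_iff antisym)
    qed
    hence "sis_fixed_point \<beta> \<delta> A = w" using nle by (simp add: sis_fixed_point_def)
    thus ?thesis using above w by blast
  qed
qed

lemma sis_fp_nonneg:
  fixes A :: "real^'n^'n"
  assumes "adjacency_matrix A" "graph_connected A" "\<beta> > 0" "\<delta> > 0"
  shows "0 \<le> sis_fixed_point \<beta> \<delta> A $ i"
  by (rule sis_fp_cases[OF assms]) (auto intro: less_imp_le)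

lemma comp_conv:
  fixes A :: "real^'n^'n" and x s :: "real \<Rightarrow> real^'n"
  assumes adj: "adjacency_matrix A" and con: "graph_connected A" and b0: "\<beta> > 0" and d0: "\<delta> > 0"
    and dom: "\<And>t i. t \<ge> 0 \<Longrightarrow> 0 \<le> x t $ i \<and> 0 \<le> s t $ i \<and> x t $ i + s t $ i \<le> 1"
    and der: "\<And>t i. t \<ge> 0 \<Longrightarrow> ((\<lambda>t. x t $ i) has_real_derivative
               (\<beta> * (1 - x t $ i - s t $ i) * (A *v x t) $ i - \<delta> * x t $ i)) (at t within {0..})"
    and e: "e > 0"
  shows "\<exists>T. \<forall>t\<ge>T. \<forall>i. x t $ i \<le> sis_fixed_point \<beta> \<delta> A $ i + e"
proof -
  have nn: "\<forall>i j. A$i$j \<ge> 0" by (rule adj_nn[OF adj])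
  define D where "D t i = \<beta> * (1 - x t $ i - s t $ i) * (A *v x t) $ i - \<delta> * x t $ i" for t i
  have xnn: "\<forall>j. 0 \<le> x t $ j" if "t \<ge> 0" for t using dom[OF that] by blast
  show ?thesis
  proof (rule sis_fp_cases[OF adj con b0 d0])
    fix \<rho> v assume below: "\<forall>i. 0 < v$i" "A *v v = \<rho> *\<^sub>R v" "\<beta> * \<rho> \<le> \<delta>"
      "sis_fixed_point \<beta> \<delta> A = 0"
    define V where "V = (\<Sum>j\<in>UNIV. v$j)"
    have vV: "v$i \<le> V" for i unfolding V_def using below(1) by (intro member_le_sum) (auto simp: less_imp_le)
    have V0: "V > 0" using vV[of undefined] below(1) by (meson less_le_trans)
    obtain m where m: "\<forall>j. v$m \<le> v$j" using finite_argmin[of "\<lambda>j. v$j"] by auto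
    define L where "L = e / (2 * V)"
    have L0: "L > 0" using e V0 by (simp add: L_def)
    define \<eta> where "\<eta> = \<delta> * L^2 * v$m"
    have eta0: "\<eta> > 0" using d0 L0 below(1) by (simp add: \<eta>_def)
    have "\<exists>T. \<forall>t\<ge>T. \<forall>j. x t $ j / v$j \<le> L + L"
    proof (rule decay[where d = "\<lambda>j t. D t j / v$j", OF _ eta0 _ L0])
      show "((\<lambda>t. x t $ j / v$j) has_real_derivative D t j / v$j) (at t within {0..})" if "t \<ge> 0" for j t
        unfolding D_def by (rule DERIV_cdivide[OF der[OF that]])
      fix t k assume t: "t \<ge> 0" and uk: "L \<le> x t $ k / v$k" and mx: "\<forall>j. x t $ j / v$j \<le> x t $ k / v$k"
      define g where "g = x t $ k / v$k"
      have xj: "\<forall>j. x t $ j \<le> g * v$j" using mx below(1) unfolding g_def by (metis pos_divide_le_eq)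
      have P: "(A *v x t)$k \<le> g * (A *v v)$k" using nn xj by (intro mv_ratio) auto
      show "D t k / v$k \<le> - \<eta>" unfolding D_def \<eta>_def
      proof (rule arith_below[OF b0 d0 below(3)])
        show "0 \<le> s t $ k" "x t $ k + s t $ k \<le> 1" using dom[OF t] by auto
        show "0 \<le> (A *v x t)$k" using nn xnn[OF t] by (intro mv_nonneg) auto
        show "(A *v x t)$k \<le> g * \<rho> * v$k" using P below(2) by simp
        show "x t $ k = g * v$k" using below(1) unfolding g_def by (metis less_irrefl nonzero_eq_divide_eq)
        show "L \<le> g" using uk unfolding g_def .
        show "0 < L" by (rule L0)
        show "v$m \<le> v$k" using m by blast
        show "0 < v$m" using below(1) by blast
      qed
    qed
    then obtain T where T: "\<forall>t\<ge>T. \<forall>j. x t $ j / v$j \<le> L + L" by blast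
    show ?thesis
    proof (intro exI allI impI)
      fix t i assume "t \<ge> T"
      hence "x t $ i / v$i \<le> 2 * L" using T by simp
      hence "x t $ i \<le> 2 * L * v$i" using below(1) by (simp add: pos_divide_le_eq)
      also have "\<dots> \<le> 2 * L * V" using vV L0 by (intro mult_left_mono) auto
      also have "\<dots> = e" using V0 by (simp add: L_def)
      finally show "x t $ i \<le> sis_fixed_point \<beta> \<delta> A $ i + e" using below(4) by simp
    qed
  next
    assume above: "\<forall>i. 0 < sis_fixed_point \<beta> \<delta> A $ i \<and> sis_fixed_point \<beta> \<delta> A $ i < 1"
      "sis_field \<beta> \<delta> A (sis_fixed_point \<beta> \<delta> A) = 0"
    define w where "w = sis_fixed_point \<beta> \<delta> A"
    have w: "\<forall>i. 0 < w$i \<and> w$i < 1" using above(1) unfolding w_def .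
    have fw: "\<delta> * w$i = \<beta> * (1 - w$i) * (A *v w)$i" for i
      using above(2) unfolding w_def[symmetric] by (metis sis_comp zero_index eq_iff_diff_eq_0)
    have Aw: "(A *v w)$i > 0" for i
    proof -
      have "\<beta> * (1 - w$i) * (A *v w)$i > 0" using fw[of i] d0 w by (metis mult_pos_pos)
      moreover have "\<beta> * (1 - w$i) > 0" using b0 w by simp
      ultimately show ?thesis by (simp add: zero_less_mult_iff)
    qed
    obtain m where m: "\<forall>j. (A *v w)$m \<le> (A *v w)$j" using finite_argmin[of "\<lambda>j. (A *v w)$j"] by auto
    define c where "c = (A *v w)$m"
    have c0: "c > 0" using Aw by (simp add: c_def)
    define e2 where "e2 = e / 2"
    have e2: "e2 > 0" using e by (simp add: e2_def)
    define \<eta> where "\<eta> = \<beta> * c * e2"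
    have eta0: "\<eta> > 0" using b0 c0 e2 by (simp add: \<eta>_def)
    have "\<exists>T. \<forall>t\<ge>T. \<forall>j. x t $ j / w$j \<le> (1 + e2) + e2"
    proof (rule decay[where d = "\<lambda>j t. D t j / w$j", OF _ eta0 _ e2])
      show "((\<lambda>t. x t $ j / w$j) has_real_derivative D t j / w$j) (at t within {0..})" if "t \<ge> 0" for j t
        unfolding D_def by (rule DERIV_cdivide[OF der[OF that]])
      fix t k assume t: "t \<ge> 0" and uk: "1 + e2 \<le> x t $ k / w$k" and mx: "\<forall>j. x t $ j / w$j \<le> x t $ k / w$k"
      define g where "g = x t $ k / w$k"
      have xj: "\<forall>j. x t $ j \<le> g * w$j" using mx w unfolding g_def by (metis pos_divide_le_eq)
      have P: "(A *v x t)$k \<le> g * (A *v w)$k" using nn xj by (intro mv_ratio) auto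
      show "D t k / w$k \<le> - \<eta>" unfolding D_def \<eta>_def
      proof (rule arith_above[OF b0])
        show "0 \<le> s t $ k" "x t $ k + s t $ k \<le> 1" using dom[OF t] by auto
        show "0 \<le> (A *v x t)$k" using nn xnn[OF t] by (intro mv_nonneg) auto
        show "(A *v x t)$k \<le> g * (A *v w)$k" by (rule P)
        show "x t $ k = g * w$k" using w unfolding g_def by (metis less_irrefl nonzero_eq_divide_eq)
        show "0 < w$k" using w by blast
        show "\<delta> * w$k = \<beta> * (1 - w$k) * (A *v w)$k" by (rule fw)
        show "1 + e2 \<le> g" using uk unfolding g_def .
        show "0 < e2" by (rule e2)
        show "c \<le> (A *v w)$k" using m unfolding c_def by blast
        show "0 < c" by (rule c0)
      qed
    qed
    then obtain T where T: "\<forall>t\<ge>T. \<forall>j. x t $ j / w$j \<le> (1 + e2) + e2" by blast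
    show ?thesis
    proof (intro exI allI impI)
      fix t i assume "t \<ge> T"
      hence "x t $ i / w$i \<le> 1 + e" using T by (simp add: e2_def add.commute)
      hence "x t $ i \<le> (1 + e) * w$i" using w by (simp add: pos_divide_le_eq)
      also have "\<dots> = w$i + e * w$i" by (simp add: algebra_simps)
      also have "\<dots> \<le> w$i + e" using w e by (simp add: mult_left_le less_imp_le)
      finally show "x t $ i \<le> sis_fixed_point \<beta> \<delta> A $ i + e" unfolding w_def .
    qed
  qed
qed

lemma arith_prod:
  fixes a c m P Q C1 :: real
  assumes "a \<ge> m" "a \<le> P" "c \<ge> C1 * m" "c \<le> Q" "m \<le> 0" "P \<ge> 0" "Q \<ge> 0" "C1 \<ge> 0"
  shows "a * c \<ge> (P * C1 + Q) * m"
proof -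
  have PC: "P * C1 * m \<le> 0" "Q * m \<le> 0" using assms by (auto simp: mult_nonneg_nonpos)
  consider "a \<ge> 0" "c \<ge> 0" | "a \<ge> 0" "c < 0" | "a < 0" "c \<ge> 0" | "a < 0" "c < 0" by linarith
  thus ?thesis
  proof cases
    case 1 thus ?thesis using PC by (simp add: algebra_simps) (smt (verit) mult_nonneg_nonneg)
  next
    case 2
    have "P * c \<le> a * c" using 2 assms by (intro mult_right_mono_neg) auto
    moreover have "P * (C1 * m) \<le> P * c" using assms by (intro mult_left_mono) auto
    ultimately show ?thesis using PC by (simp add: algebra_simps)
  next
    case 3
    have "m * c \<le> a * c" using 3 assms by (intro mult_right_mono) auto
    moreover have "m * Q \<le> m * c" using assms by (intro mult_left_mono_neg) auto
    ultimately show ?thesis using PC by (simp add: algebra_simps)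
  next
    case 4
    have "0 \<le> a * c" using 4 by (simp add: mult_nonpos_nonpos)
    thus ?thesis using PC by (simp add: algebra_simps)
  qed
qed

lemma mv_lower:
  fixes A :: "real^'n^'n"
  assumes "adjacency_matrix A" "\<forall>j. x$j \<ge> m" "m \<le> 0"
  shows "(A *v x)$i \<ge> real CARD('n) * m"
proof -
  have "(\<Sum>j\<in>(UNIV::'n set). m) \<le> (A *v x)$i" unfolding mv_comp
  proof (intro sum_mono)
    fix j
    have "A$i$j = 0 \<or> A$i$j = 1" using assms(1) by (simp add: adjacency_matrix_def)
    thus "m \<le> A$i$j * x$j" using assms by auto
  qed
  thus ?thesis by simp
qed

lemma mv_upper:
  fixes A :: "real^'n^'n"
  assumes "adjacency_matrix A" "\<forall>j. \<bar>x$j\<bar> \<le> M" "M \<ge> 0"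
  shows "\<bar>(A *v x)$i\<bar> \<le> real CARD('n) * M"
proof -
  have "\<bar>(A *v x)$i\<bar> \<le> (\<Sum>j\<in>UNIV. \<bar>A$i$j * x$j\<bar>)" unfolding mv_comp by (rule sum_abs)
  also have "\<dots> \<le> (\<Sum>j\<in>(UNIV::'n set). M)"
  proof (intro sum_mono)
    fix j
    have "A$i$j = 0 \<or> A$i$j = 1" using assms(1) by (simp add: adjacency_matrix_def)
    thus "\<bar>A$i$j * x$j\<bar> \<le> M" using assms by auto
  qed
  finally show ?thesis by simp
qed


lemma caseX:
  fixes \<beta> \<delta> m xi a c P Q N K :: real
  assumes "\<beta> > 0" "\<delta> > 0" "m \<le> 0" "xi = m" "a \<ge> m" "a \<le> P" "c \<ge> N * m" "c \<le> Q"
    "P \<ge> 0" "Q \<ge> 0" "N \<ge> 0" "K \<ge> \<beta> * (P * N + Q)"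
  shows "\<beta> * a * c - \<delta> * xi \<ge> K * m"
proof -
  have "a * c \<ge> (P * N + Q) * m" using assms by (intro arith_prod) auto
  hence 1: "\<beta> * (a * c) \<ge> \<beta> * ((P * N + Q) * m)" using assms(1) by (intro mult_left_mono) auto
  have 2: "K * m \<le> \<beta> * (P * N + Q) * m" using assms(3,12) by (intro mult_right_mono_neg) auto
  have 3: "- \<delta> * xi \<ge> 0" using assms(2,3,4) by (simp add: mult_nonneg_nonpos)
  show ?thesis using 1 2 3 by (simp add: algebra_simps)
qed

lemma caseS:
  fixes b1 b2 d1 d2 m c1 c2 R xi yi K :: real
  assumes "b1 > 0" "b2 > 0" "d1 > 0" "d2 > 0" "m \<le> 0" "c1 \<ge> - R" "c2 \<ge> - R" "R \<ge> 0"
    "xi \<ge> m" "yi \<ge> m" "K \<ge> b1 * R + b2 * R + d1 + d2"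
  shows "- ((b1 * m * c1 - d1 * xi) + (b2 * m * c2 - d2 * yi)) \<ge> K * m"
proof -
  have 1: "(- m) * c1 \<ge> (- m) * (- R)" using assms by (intro mult_left_mono) auto
  have 2: "(- m) * c2 \<ge> (- m) * (- R)" using assms by (intro mult_left_mono) auto
  have 3: "b1 * ((- m) * c1) \<ge> b1 * ((- m) * (- R))" using 1 assms by (intro mult_left_mono) auto
  have 4: "b2 * ((- m) * c2) \<ge> b2 * ((- m) * (- R))" using 2 assms by (intro mult_left_mono) auto
  have 5: "d1 * xi \<ge> d1 * m" "d2 * yi \<ge> d2 * m" using assms by auto
  have 6: "K * m \<le> (b1 * R + b2 * R + d1 + d2) * m" using assms(5,11) by (intro mult_right_mono_neg) auto
  show ?thesis using 3 4 5 6 by (simp add: algebra_simps)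
qed

lemma domD:
  "p \<in> bivirus_domain \<longleftrightarrow> (\<forall>i. 0 \<le> fst p $ i \<and> fst p $ i \<le> 1 \<and> 0 \<le> snd p $ i \<and> snd p $ i \<le> 1)
      \<and> (\<forall>i. fst p $ i + snd p $ i \<le> 1)"
  by (cases p) (auto simp: bivirus_domain_def less_eq_vec_def)

theorem proposition4:
  fixes A B :: "real^'n^'n" and \<beta>1 \<delta>1 \<beta>2 \<delta>2 :: real
    and z :: "real \<Rightarrow> (real^'n) \<times> (real^'n)"
  assumes "adjacency_matrix A" and "graph_connected A"
    and "adjacency_matrix B" and "graph_connected B"
    and "\<beta>1 > 0" and "\<delta>1 > 0" and "\<beta>2 > 0" and "\<delta>2 > 0"
    and "z 0 \<in> bivirus_domain - {(0, 0)}"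
    and "\<And>t. t \<ge> 0 \<Longrightarrow>
           (z has_vector_derivative bivirus_field \<beta>1 \<delta>1 \<beta>2 \<delta>2 A B (z t)) (at t within {0..})"
  shows "((\<lambda>t. infdist (z t)
            {p \<in> bivirus_domain.
               le_K (0, sis_fixed_point \<beta>2 \<delta>2 B) p \<and> le_K p (sis_fixed_point \<beta>1 \<delta>1 A, 0)})
          \<longlongrightarrow> 0) at_top"
proof -
  note adjA = assms(1) and conA = assms(2) and adjB = assms(3) and conB = assms(4)
  note b1 = assms(5) and d1 = assms(6) and b2 = assms(7) and d2 = assms(8)
  define x where "x t = fst (z t)" for t
  define y where "y t = snd (z t)" for t
  define F where "F = bivirus_field \<beta>1 \<delta>1 \<beta>2 \<delta>2 A B"
  define DX where "DX t i = \<beta>1 * (1 - x t $ i - y t $ i) * (A *v x t) $ i - \<delta>1 * x t $ i" for t i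
  define DY where "DY t i = \<beta>2 * (1 - x t $ i - y t $ i) * (B *v y t) $ i - \<delta>2 * y t $ i" for t i
  have Fx: "fst (F (z t)) $ i = DX t i" for t i
    by (simp add: F_def DX_def x_def y_def bivirus_field_def Let_def)
  have Fy: "snd (F (z t)) $ i = DY t i" for t i
    by (simp add: F_def DY_def x_def y_def bivirus_field_def Let_def)
  have zd: "(z has_vector_derivative F (z t)) (at t within {0..})" if "t \<ge> 0" for t
    using assms(10)[OF that] unfolding F_def .
  have dx: "((\<lambda>t. x t $ i) has_real_derivative DX t i) (at t within {0..})" if "t \<ge> 0" for t i
  proof -
    have bl: "bounded_linear (\<lambda>p::((real^'n) \<times> (real^'n)). fst p $ i)"
      by (rule bounded_linear_compose[OF bounded_linear_vec_nth bounded_linear_fst])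
    have "((\<lambda>s. fst (z s) $ i) has_vector_derivative fst (F (z t)) $ i) (at t within {0..})"
      by (rule bounded_linear.has_vector_derivative[OF bl zd[OF that]])
    thus ?thesis unfolding Fx x_def by (simp add: has_real_derivative_iff_has_vector_derivative)
  qed
  have dy: "((\<lambda>t. y t $ i) has_real_derivative DY t i) (at t within {0..})" if "t \<ge> 0" for t i
  proof -
    have bl: "bounded_linear (\<lambda>p::((real^'n) \<times> (real^'n)). snd p $ i)"
      by (rule bounded_linear_compose[OF bounded_linear_vec_nth bounded_linear_snd])
    have "((\<lambda>s. snd (z s) $ i) has_vector_derivative snd (F (z t)) $ i) (at t within {0..})"
      by (rule bounded_linear.has_vector_derivative[OF bl zd[OF that]])
    thus ?thesis unfolding Fy y_def by (simp add: has_real_derivative_iff_has_vector_derivative)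
  qed
  have xc: "x t = fst (z t)" "y t = snd (z t)" for t by (simp_all add: x_def y_def)
  have z0: "z 0 \<in> bivirus_domain" using assms(9) by blast
  define q :: "'n + 'n + 'n \<Rightarrow> real \<Rightarrow> real" where
    "q j = (case j of Inl i \<Rightarrow> (\<lambda>t. x t $ i) | Inr (Inl i) \<Rightarrow> (\<lambda>t. y t $ i)
               | Inr (Inr i) \<Rightarrow> (\<lambda>t. 1 - x t $ i - y t $ i))" for j
  define dq :: "'n + 'n + 'n \<Rightarrow> real \<Rightarrow> real" where
    "dq j = (case j of Inl i \<Rightarrow> (\<lambda>t. DX t i) | Inr (Inl i) \<Rightarrow> (\<lambda>t. DY t i)
               | Inr (Inr i) \<Rightarrow> (\<lambda>t. - (DX t i + DY t i)))" for j
  have qd: "(q j has_real_derivative dq j t) (at t within {0..})" if "t \<ge> 0" for j t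
  proof (cases j)
    case (Inl i) thus ?thesis using dx[OF that, of i] by (simp add: q_def dq_def)
  next
    case (Inr j')
    show ?thesis
    proof (cases j')
      case (Inl i) thus ?thesis using dy[OF that, of i] \<open>j = Inr j'\<close> by (simp add: q_def dq_def)
    next
      case (Inr i)
      have "((\<lambda>t. 1 - x t $ i - y t $ i) has_real_derivative 0 - DX t i - DY t i) (at t within {0..})"
        by (intro DERIV_diff DERIV_const dx[OF that] dy[OF that])
      thus ?thesis using \<open>j = Inr j'\<close> Inr by (simp add: q_def dq_def)
    qed
  qed
  have qinit: "q j 0 \<ge> 0" for j
    using z0 unfolding domD by (auto simp: q_def xc split: sum.splits) (smt (verit))
  have qcond: "\<exists>K\<ge>0. \<forall>t k. 0 \<le> t \<longrightarrow> t \<le> T \<longrightarrow> q k t \<le> 0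
                  \<longrightarrow> (\<forall>j. q k t \<le> q j t) \<longrightarrow> dq k t \<ge> K * q k t" if T: "T \<ge> 0" for T
  proof -
    have "continuous_on {0..T} z"
      unfolding continuous_on_eq_continuous_within
    proof
      fix t assume "t \<in> {0..T}"
      hence "continuous (at t within {0..}) z" using has_vector_derivative_continuous[OF zd] by auto
      thus "continuous (at t within {0..T}) z" by (rule continuous_within_subset) auto
    qed
    hence "compact (z ` {0..T})" by (intro compact_continuous_image) auto
    then obtain M0 where M0: "\<forall>p\<in>z ` {0..T}. norm p \<le> M0" using compact_imp_bounded bounded_iff by metis
    define M where "M = max M0 0"
    have M0': "M \<ge> 0" by (simp add: M_def)
    have bx: "\<bar>x t $ i\<bar> \<le> M" "\<bar>y t $ i\<bar> \<le> M" if "0 \<le> t" "t \<le> T" for t i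
    proof -
      have nz: "norm (z t) \<le> M" using M0 that unfolding M_def by force
      have "\<bar>x t $ i\<bar> \<le> norm (x t)" by (rule component_le_norm_cart)
      also have "\<dots> \<le> norm (z t)" using norm_fst_le[of "x t" "y t"] by (simp add: xc)
      finally show "\<bar>x t $ i\<bar> \<le> M" using nz by linarith
      have "\<bar>y t $ i\<bar> \<le> norm (y t)" by (rule component_le_norm_cart)
      also have "\<dots> \<le> norm (z t)" using norm_snd_le[of "y t" "x t"] by (simp add: xc)
      finally show "\<bar>y t $ i\<bar> \<le> M" using nz by linarith
    qed
    define N where "N = real CARD('n)"
    have N0: "N \<ge> 0" by (simp add: N_def)
    define K0 where "K0 = (1 + 2 * M) * N + N * M"
    have K00: "K0 \<ge> 0" using M0' N0 by (simp add: K0_def)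
    define K where "K = (\<beta>1 + \<beta>2) * K0 + \<beta>1 * (N * M) + \<beta>2 * (N * M) + \<delta>1 + \<delta>2"
    have NM: "N * M \<ge> 0" using M0' N0 by simp
    have e1: "\<beta>2 * K0 \<ge> 0" "\<beta>1 * K0 \<ge> 0" "\<beta>1 * (N * M) \<ge> 0" "\<beta>2 * (N * M) \<ge> 0"
      using K00 NM b1 b2 by simp_all
    have Kexp: "K = \<beta>1 * K0 + \<beta>2 * K0 + \<beta>1 * (N * M) + \<beta>2 * (N * M) + \<delta>1 + \<delta>2"
      unfolding K_def by (simp add: distrib_right)
    have K0': "K \<ge> 0" using Kexp e1 d1 d2 by linarith
    show ?thesis
    proof (intro exI[of _ K] conjI allI impI K0')
      fix t k assume t0: "0 \<le> t" and tT: "t \<le> T" and qk: "q k t \<le> 0" and mn: "\<forall>j. q k t \<le> q j t"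
      define m where "m = q k t"
      have mx: "m \<le> x t $ j" for j using mn[rule_format, of "Inl j"] by (simp add: m_def q_def)
      have my: "m \<le> y t $ j" for j using mn[rule_format, of "Inr (Inl j)"] by (simp add: m_def q_def)
      have ms: "m \<le> 1 - x t $ j - y t $ j" for j using mn[rule_format, of "Inr (Inr j)"] by (simp add: m_def q_def)
      have m0: "m \<le> 0" using qk by (simp add: m_def)
      have au: "1 - x t $ j - y t $ j \<le> 1 + 2 * M" for j using bx[OF t0 tT, of j] by linarith
      have Axl: "(A *v x t)$j \<ge> N * m" for j unfolding N_def using adjA mx m0 by (intro mv_lower) auto
      have Byl: "(B *v y t)$j \<ge> N * m" for j unfolding N_def using adjB my m0 by (intro mv_lower) auto
      have Axu: "\<bar>(A *v x t)$j\<bar> \<le> N * M" for j unfolding N_def using adjA bx[OF t0 tT] M0' by (intro mv_upper) auto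
      have Byu: "\<bar>(B *v y t)$j\<bar> \<le> N * M" for j unfolding N_def using adjB bx[OF t0 tT] M0' by (intro mv_upper) auto
      show "dq k t \<ge> K * q k t"
      proof (cases k)
        case (Inl i)
        have "dq k t = DX t i" using Inl by (simp add: dq_def)
        also have "DX t i \<ge> K * m" unfolding DX_def
        proof (rule caseX[OF b1 d1 m0])
          show "x t $ i = m" using Inl by (simp add: m_def q_def)
          show "m \<le> 1 - x t $ i - y t $ i" by (rule ms)
          show "1 - x t $ i - y t $ i \<le> 1 + 2 * M" by (rule au)
          show "N * m \<le> (A *v x t)$i" by (rule Axl)
          show "(A *v x t)$i \<le> N * M" using Axu[of i] by linarith
          show "0 \<le> 1 + 2 * M" "0 \<le> N * M" "0 \<le> N" using M0' NM N0 by auto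
          show "\<beta>1 * ((1 + 2 * M) * N + N * M) \<le> K"
            unfolding K0_def[symmetric] using Kexp e1 d1 d2 by linarith
        qed
        finally show ?thesis by (simp add: m_def)
      next
        case (Inr j')
        show ?thesis
        proof (cases j')
          case (Inl i)
          have "dq k t = DY t i" using Inl \<open>k = Inr j'\<close> by (simp add: dq_def)
          also have "DY t i \<ge> K * m" unfolding DY_def
          proof (rule caseX[OF b2 d2 m0])
            show "y t $ i = m" using Inl \<open>k = Inr j'\<close> by (simp add: m_def q_def)
            show "m \<le> 1 - x t $ i - y t $ i" by (rule ms)
            show "1 - x t $ i - y t $ i \<le> 1 + 2 * M" by (rule au)
            show "N * m \<le> (B *v y t)$i" by (rule Byl)
            show "(B *v y t)$i \<le> N * M" using Byu[of i] by linarith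
            show "0 \<le> 1 + 2 * M" "0 \<le> N * M" "0 \<le> N" using M0' NM N0 by auto
            show "\<beta>2 * ((1 + 2 * M) * N + N * M) \<le> K"
              unfolding K0_def[symmetric] using Kexp e1 d1 d2 by linarith
          qed
          finally show ?thesis by (simp add: m_def)
        next
          case (Inr i)
          have mi: "1 - x t $ i - y t $ i = m" using Inr \<open>k = Inr j'\<close> by (simp add: m_def q_def)
          have "dq k t = - ((\<beta>1 * m * (A *v x t)$i - \<delta>1 * x t $ i) + (\<beta>2 * m * (B *v y t)$i - \<delta>2 * y t $ i))"
            using Inr \<open>k = Inr j'\<close> mi by (simp add: dq_def DX_def DY_def)
          also have "\<dots> \<ge> K * m"
          proof (rule caseS[OF b1 b2 d1 d2 m0 _ _ NM mx my])
            show "- (N * M) \<le> (A *v x t)$i" using Axu[of i] by linarith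
            show "- (N * M) \<le> (B *v y t)$i" using Byu[of i] by linarith
            show "\<beta>1 * (N * M) + \<beta>2 * (N * M) + \<delta>1 + \<delta>2 \<le> K"
              using Kexp e1 d1 d2 by linarith
          qed
          finally show ?thesis by (simp add: m_def)
        qed
      qed
    qed
  qed
  have qnn: "q j t \<ge> 0" if "t \<ge> 0" for j t
    by (rule stay_nonneg[OF qd qinit qcond that])
  have dom: "0 \<le> x t $ i \<and> 0 \<le> y t $ i \<and> x t $ i + y t $ i \<le> 1" if "t \<ge> 0" for t i
    using qnn[OF that, of "Inl i"] qnn[OF that, of "Inr (Inl i)"] qnn[OF that, of "Inr (Inr i)"]
    by (simp add: q_def)
  define xs where "xs = sis_fixed_point \<beta>1 \<delta>1 A"
  define ys where "ys = sis_fixed_point \<beta>2 \<delta>2 B"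
  have xs0: "0 \<le> xs $ i" for i unfolding xs_def by (rule sis_fp_nonneg[OF adjA conA b1 d1])
  have ys0: "0 \<le> ys $ i" for i unfolding ys_def by (rule sis_fp_nonneg[OF adjB conB b2 d2])
  have convx: "\<exists>T. \<forall>t\<ge>T. \<forall>i. x t $ i \<le> xs $ i + e" if "e > 0" for e
    unfolding xs_def
  proof (rule comp_conv[OF adjA conA b1 d1 _ _ that])
    show "0 \<le> x t $ i \<and> 0 \<le> y t $ i \<and> x t $ i + y t $ i \<le> 1" if "t \<ge> 0" for t i using dom[OF that] .
    show "((\<lambda>t. x t $ i) has_real_derivative
          \<beta>1 * (1 - x t $ i - y t $ i) * (A *v x t) $ i - \<delta>1 * x t $ i) (at t within {0..})" if "t \<ge> 0" for t i
      using dx[OF that, of i] unfolding DX_def .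
  qed
  have convy: "\<exists>T. \<forall>t\<ge>T. \<forall>i. y t $ i \<le> ys $ i + e" if "e > 0" for e
    unfolding ys_def
  proof (rule comp_conv[OF adjB conB b2 d2 _ _ that])
    show "0 \<le> y t $ i \<and> 0 \<le> x t $ i \<and> y t $ i + x t $ i \<le> 1" if "t \<ge> 0" for t i using dom[OF that, of i] by auto
    show "((\<lambda>t. y t $ i) has_real_derivative
          \<beta>2 * (1 - y t $ i - x t $ i) * (B *v y t) $ i - \<delta>2 * y t $ i) (at t within {0..})" if "t \<ge> 0" for t i
    proof -
      have e: "1 - y t $ i - x t $ i = 1 - x t $ i - y t $ i" by simp
      show ?thesis using dy[OF that, of i] unfolding DY_def e .
    qed
  qed
  define Z where "Z = {p \<in> bivirus_domain. le_K (0, ys) p \<and> le_K p (xs, 0)}"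
  define N where "N = real CARD('n)"
  have N0: "N > 0" by (simp add: N_def)
  show ?thesis
    unfolding xs_def[symmetric] ys_def[symmetric] Z_def[symmetric] tendsto_iff eventually_at_top_linorder
  proof (intro allI impI)
    fix \<epsilon> :: real assume eps: "\<epsilon> > 0"
    define e where "e = \<epsilon> / (4 * N)"
    have e0: "e > 0" using eps N0 by (simp add: e_def)
    obtain T1 where T1: "\<forall>t\<ge>T1. \<forall>i. x t $ i \<le> xs $ i + e" using convx[OF e0] by blast
    obtain T2 where T2: "\<forall>t\<ge>T2. \<forall>i. y t $ i \<le> ys $ i + e" using convy[OF e0] by blast
    show "\<exists>T. \<forall>t\<ge>T. dist (infdist (z t) Z) 0 < \<epsilon>"
    proof (intro exI allI impI)
      fix t assume t: "t \<ge> max (max T1 T2) 0"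
      hence t0: "t \<ge> 0" and xt: "\<forall>i. x t $ i \<le> xs $ i + e" and yt: "\<forall>i. y t $ i \<le> ys $ i + e"
        using T1 T2 by auto
      define p1 where "p1 = (\<chi> i. min (x t $ i) (xs $ i))"
      define p2 where "p2 = (\<chi> i. min (y t $ i) (ys $ i))"
      have c: "0 \<le> p1$i \<and> p1$i \<le> 1 \<and> 0 \<le> p2$i \<and> p2$i \<le> 1 \<and> p1$i + p2$i \<le> 1
          \<and> p1$i \<le> xs$i \<and> p2$i \<le> ys$i" for i
        using dom[OF t0, of i] xs0[of i] ys0[of i] unfolding p1_def p2_def by (auto simp: min_def)
      have pZ: "(p1, p2) \<in> Z"
        unfolding Z_def domD le_K_def using c by (auto simp: less_eq_vec_def)
      have "infdist (z t) Z \<le> dist (z t) (p1, p2)" by (rule infdist_le[OF pZ])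
      also have "dist (z t) (p1, p2) = norm (x t - p1, y t - p2)"
      proof -
        have "z t = (x t, y t)" by (simp add: xc)
        thus ?thesis by (simp add: dist_norm)
      qed
      also have "\<dots> \<le> norm (x t - p1) + norm (y t - p2)" by (rule norm_Pair_le)
      also have "\<dots> \<le> N * e + N * e"
      proof (rule add_mono)
        have "norm (x t - p1) \<le> (\<Sum>i\<in>UNIV. \<bar>(x t - p1) $ i\<bar>)" by (rule norm_le_l1_cart)
        also have "\<dots> \<le> (\<Sum>i\<in>(UNIV::'n set). e)"
        proof (intro sum_mono)
          fix i show "\<bar>(x t - p1) $ i\<bar> \<le> e"
            using xt[rule_format, of i] e0 by (auto simp: p1_def min_def)
        qed
        finally show "norm (x t - p1) \<le> N * e" by (simp add: N_def)
        have "norm (y t - p2) \<le> (\<Sum>i\<in>UNIV. \<bar>(y t - p2) $ i\<bar>)" by (rule norm_le_l1_cart)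
        also have "\<dots> \<le> (\<Sum>i\<in>(UNIV::'n set). e)"
        proof (intro sum_mono)
          fix i show "\<bar>(y t - p2) $ i\<bar> \<le> e"
            using yt[rule_format, of i] e0 by (auto simp: p2_def min_def)
        qed
        finally show "norm (y t - p2) \<le> N * e" by (simp add: N_def)
      qed
      also have "\<dots> = \<epsilon> / 2" using N0 by (simp add: e_def)
      finally have "infdist (z t) Z \<le> \<epsilon> / 2" .
      thus "dist (infdist (z t) Z) 0 < \<epsilon>" using eps infdist_nonneg[of "z t" Z] by simp
    qed
  qed
qed

end
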